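(* Let $k\ge 0$. Let $p_1(x_1,\bar x_3)$ be a probability density on $\mathbb R\times\mathbb R^k$ and $p_2$ a smooth probability density on $\mathbb R$, and consider the translation families $\{p_1(x_1-\tau,\bar x_3)\}_{\tau\in\mathbb R}$ and $\{p_2(x_2-\tau)\}_{\tau\in\mathbb R}$, whose Fisher informations with respect to $\tau$, denoted $J^\tau_{p_1}$ and $J^\tau_{p_2}$, are assumed to exist, be finite and positive. Let $$r(z-\tau,\bar x_3)=\int_{\mathbb R}p_1(s-\tau,\bar x_3)\,p_2(z-s)\,ds.$$ Then the Fisher information $J^\tau_r$ of the family $\{r(z-\tau,\bar x_3)\}_{\tau\in\mathbb R}$ with respect to $\tau$ satisfies $$\frac{1}{J^\tau_r}\;\ge\;\frac{1}{J^\tau_{p_1}}+\frac{1}{J^\tau_{p_2}}.$$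
   Context: A smooth density $\Phi$ on $\mathbb R$: $\Phi(x)>0$ for all $x$, $\Phi'$ exists, and $\int\Phi'(y)^2/\Phi(y)\,dy<\infty$. For a family of densities $\{f(z_1-\tau,z_2,\dots,z_m)\}_{\tau\in\mathbb R}$ on $\mathbb R^m$, its Fisher information with respect to $\tau$ is $\int \frac{1}{f(z_1-\tau,z_2,\dots,z_m)}\left[\frac{d}{d\tau}f(z_1-\tau,z_2,\dots,z_m)\right]^2dz_1\cdots dz_m$ (independent of $\tau$). Note that $\bar x_3$ may be dependent on $x_1$ under $p_1$. *)

theory Defs
  imports "HOL-Analysis.Analysis"
begin

text \<open>The space R^k, k \<ge> 0, as the finite product measure of k copies of Lebesgue measure
  (points are functions nat \<Rightarrow> real, extensional on {..<k}); k = 0 gives a one-point space.\<close>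
definition Rk :: "nat \<Rightarrow> (nat \<Rightarrow> real) measure" where
  "Rk k = PiM {..<k} (\<lambda>_. lborel)"

text \<open>Fisher information with respect to tau of the translation family
  f(z1 - tau, z') on R x M (evaluated at tau = 0; it is independent of tau).\<close>
definition fisher_shift :: "'b measure \<Rightarrow> (real \<times> 'b \<Rightarrow> real) \<Rightarrow> ennreal" where
  "fisher_shift M f =
     (\<integral>\<^sup>+ z. ennreal ((deriv (\<lambda>\<tau>. f (fst z - \<tau>, snd z)) 0)\<^sup>2 / f z) \<partial>(lborel \<Otimes>\<^sub>M M))"

definition fisher_shift1 :: "(real \<Rightarrow> real) \<Rightarrow> ennreal" where
  "fisher_shift1 g = (\<integral>\<^sup>+ x. ennreal ((deriv (\<lambda>\<tau>. g (x - \<tau>)) 0)\<^sup>2 / g x) \<partial>lborel)"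

definition conv_first :: "(real \<times> 'b \<Rightarrow> real) \<Rightarrow> (real \<Rightarrow> real) \<Rightarrow> real \<times> 'b \<Rightarrow> real" where
  "conv_first p1 p2 z = (\<integral> s. p1 (s, snd z) * p2 (fst z - s) \<partial>lborel)"

end

theory Submission
  imports Defs
begin


lemma deriv_shift0:
  fixes g :: "real \<Rightarrow> real"
  assumes "g differentiable (at x)"
  shows "deriv (\<lambda>\<tau>. g (x - \<tau>)) 0 = - deriv g x"
proof -
  have "(g has_real_derivative deriv g x) (at x)"
    using assms DERIV_deriv_iff_real_differentiable by blast
  then have "(g has_real_derivative deriv g x) (at (x - 0))" by simp
  then have "((\<lambda>\<tau>. g (x - \<tau>)) has_real_derivative deriv g x * (0 - 1)) (at 0)"
    by (rule DERIV_chain2) (auto intro!: derivative_eq_intros)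
  then show ?thesis by (simp add: DERIV_imp_deriv)
qed

lemma deriv_measurable:
  fixes g :: "real \<Rightarrow> real"
  assumes d: "\<And>x. g differentiable (at x)"
  shows "deriv g \<in> borel_measurable borel"
proof (rule borel_measurable_LIMSEQ_real)
  have cont: "continuous_on UNIV g"
    using d by (simp add: continuous_at_imp_continuous_on differentiable_imp_continuous_within)
  then have gm: "g \<in> borel_measurable borel" by (rule borel_measurable_continuous_onI)
  show "(\<lambda>x. (g (x + 1 / Suc i) - g x) * Suc i) \<in> borel_measurable borel" for i
    using gm by measurable
  fix x :: real
  have D: "(g has_real_derivative deriv g x) (at x)"
    using d DERIV_deriv_iff_real_differentiable by blast
  then have "((\<lambda>h. (g (x + h) - g x) / h) \<longlongrightarrow> deriv g x) (at 0)"
    using DERIV_def by blast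
  moreover have "filterlim (\<lambda>i::nat. 1 / real (Suc i)) (at 0) sequentially"
  proof (rule filterlim_atI)
    show "(\<lambda>i::nat. 1 / real (Suc i)) \<longlonglongrightarrow> 0"
      using LIMSEQ_inverse_real_of_nat by (simp add: inverse_eq_divide)
  qed auto
  ultimately have "(\<lambda>i::nat. (g (x + 1 / Suc i) - g x) / (1 / Suc i)) \<longlonglongrightarrow> deriv g x"
    using filterlim_compose by fastforce
  then show "(\<lambda>i. (g (x + 1 / Suc i) - g x) * Suc i) \<longlonglongrightarrow> deriv g x"
    by simp
qed



lemma trans_integrable:
  fixes f :: "real \<Rightarrow> real"
  assumes "integrable lborel f" shows "integrable lborel (\<lambda>t. f (u - t))"
  using lborel_integrable_real_affine[OF assms, of "-1" u] by simp

lemma trans_integral: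
  fixes f :: "real \<Rightarrow> real"
  shows "(\<integral>t. f (u - t) \<partial>lborel) = (\<integral>t. f t \<partial>lborel)"
  using lborel_integral_real_affine[of "-1" f u] by simp

lemma trans_nn:
  fixes f :: "real \<Rightarrow> ennreal"
  assumes "f \<in> borel_measurable borel"
  shows "(\<integral>\<^sup>+t. f (u - t) \<partial>lborel) = (\<integral>\<^sup>+t. f t \<partial>lborel)"
  using nn_integral_real_affine[OF assms, of "-1" u] by simp

lemma ftc_lebesgue:
  fixes F F' :: "real \<Rightarrow> real"
  assumes ab: "a \<le> b" and D: "\<And>x. (F has_real_derivative F' x) (at x)"
    and I: "set_integrable lborel {a..b} F'"
  shows "(\<integral>x\<in>{a..b}. F' x \<partial>lborel) = F b - F a"
proof -
  have "(F' has_integral (F b - F a)) {a..b}"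
    using ab by (intro fundamental_theorem_of_calculus)
      (auto intro: has_field_derivative_at_within[OF D] simp: has_real_derivative_iff_has_vector_derivative[symmetric])
  moreover have "(\<integral>x\<in>{a..b}. F' x \<partial>lborel) = integral {a..b} F'"
    using set_borel_integral_eq_integral(2)[OF I] by simp
  ultimately show ?thesis by (simp add: integral_unique)
qed

lemma amgm_deriv:
  fixes g d :: real
  assumes "g \<ge> 0" "g = 0 \<Longrightarrow> d = 0"
  shows "\<bar>d\<bar> \<le> d\<^sup>2 / g + g"
proof (cases "g = 0")
  case False
  then have gp: "g > 0" using assms by simp
  have "\<bar>d\<bar> * g \<le> d\<^sup>2 + g * g"
  proof (cases "\<bar>d\<bar> \<le> g")
    case True then show ?thesis using gp
      by (smt (verit) mult_right_mono zero_le_power2)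
  next
    case False then have "\<bar>d\<bar> * g \<le> \<bar>d\<bar> * \<bar>d\<bar>" using gp
      by (intro mult_left_mono) auto
    moreover have "\<bar>d\<bar> * \<bar>d\<bar> = d\<^sup>2" by (simp add: power2_eq_square)
    ultimately show ?thesis using gp by (smt (verit) mult_pos_pos)
  qed
  then show ?thesis using gp by (simp add: field_simps power2_eq_square)
qed (use assms in simp)

lemma deriv_zero_at_zero:
  fixes g :: "real \<Rightarrow> real"
  assumes "g differentiable (at x)" "\<And>y. g y \<ge> 0" "g x = 0"
  shows "deriv g x = 0"
proof -
  have "(g has_real_derivative deriv g x) (at x)"
    using assms DERIV_deriv_iff_real_differentiable by blast
  then show ?thesis
    by (rule DERIV_local_min[of _ _ _ 1]) (use assms in auto)
qed

locale nicef =
  fixes g :: "real \<Rightarrow> real"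
  assumes d: "\<And>x. g differentiable (at x)"
    and nn: "\<And>x. g x \<ge> 0"
    and fin1: "(\<integral>\<^sup>+x. ennreal (g x) \<partial>lborel) < \<infinity>"
    and fin2: "(\<integral>\<^sup>+x. ennreal ((deriv g x)\<^sup>2 / g x) \<partial>lborel) < \<infinity>"
begin

lemma cont: "continuous_on UNIV g"
  using d by (simp add: continuous_at_imp_continuous_on differentiable_imp_continuous_within)

lemma isCont: "isCont g x"
  using d differentiable_imp_continuous_within by blast

lemma meas[measurable]: "g \<in> borel_measurable borel"
  using cont by (rule borel_measurable_continuous_onI)

lemma dmeas[measurable]: "deriv g \<in> borel_measurable borel"
  using d by (rule deriv_measurable)

lemma DER: "(g has_real_derivative deriv g x) (at x)"
  using d DERIV_deriv_iff_real_differentiable by blast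

lemma int: "integrable lborel g"
  unfolding integrable_iff_bounded using fin1 nn by simp

lemma dbound: "\<bar>deriv g x\<bar> \<le> (deriv g x)\<^sup>2 / g x + g x"
  by (rule amgm_deriv) (use nn deriv_zero_at_zero[OF d nn] in auto)

lemma dint: "integrable lborel (deriv g)"
  unfolding integrable_iff_bounded
proof
  show "deriv g \<in> borel_measurable lborel" by simp
  have "(\<integral>\<^sup>+x. ennreal (norm (deriv g x)) \<partial>lborel)
      \<le> (\<integral>\<^sup>+x. ennreal ((deriv g x)\<^sup>2 / g x) + ennreal (g x) \<partial>lborel)"
    by (intro nn_integral_mono) (use dbound nn in \<open>auto simp: ennreal_plus[symmetric] simp del: ennreal_plus\<close>)
  also have "\<dots> = (\<integral>\<^sup>+x. ennreal ((deriv g x)\<^sup>2 / g x) \<partial>lborel) + (\<integral>\<^sup>+x. ennreal (g x) \<partial>lborel)"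
    by (rule nn_integral_add) auto
  also have "\<dots> < \<infinity>" using fin1 fin2 by simp
  finally show "(\<integral>\<^sup>+x. ennreal (norm (deriv g x)) \<partial>lborel) < \<infinity>" .
qed

lemma ftc: "a \<le> b \<Longrightarrow> (\<integral>x\<in>{a..b}. deriv g x \<partial>lborel) = g b - g a"
  by (rule ftc_lebesgue) (auto intro: DER
      simp: set_integrable_def intro!: integrable_mult_indicator[OF _ dint, simplified])

lemma set_int_bound: "\<bar>(\<integral>x\<in>A. deriv g x \<partial>lborel)\<bar> \<le> (\<integral>x. \<bar>deriv g x\<bar> \<partial>lborel)" if "A \<in> sets borel"
proof -
  have "\<bar>(\<integral>x\<in>A. deriv g x \<partial>lborel)\<bar> \<le> (\<integral>x. \<bar>indicator A x *\<^sub>R deriv g x\<bar> \<partial>lborel)"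
    unfolding set_lebesgue_integral_def by (rule integral_abs_bound)
  also have "\<dots> \<le> (\<integral>x. \<bar>deriv g x\<bar> \<partial>lborel)"
    using that dint integrable_mult_indicator[OF _ dint, of A]
    by (intro integral_mono) (auto simp: indicator_def)
  finally show ?thesis .
qed

lemma bounded: "\<bar>g x\<bar> \<le> g 0 + (\<integral>x. \<bar>deriv g x\<bar> \<partial>lborel)"
proof (cases "0 \<le> x")
  case True
  from ftc[OF True] set_int_bound[of "{0..x}"] show ?thesis using nn[of x] nn[of 0] by auto
next
  case False
  from ftc[of x 0] set_int_bound[of "{x..0}"] False show ?thesis using nn[of x] nn[of 0] by auto
qed

end



lemma integrable_bdd_mult:
  fixes f \<phi> :: "real \<Rightarrow> real"
  assumes "integrable lborel f" "\<phi> \<in> borel_measurable borel" "\<And>x. \<bar>\<phi> x\<bar> \<le> B"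
  shows "integrable lborel (\<lambda>t. f t * \<phi> t)"
proof (rule Bochner_Integration.integrable_bound[where f="\<lambda>t. B * \<bar>f t\<bar>"])
  show "integrable lborel (\<lambda>t. B * \<bar>f t\<bar>)" using assms(1) by auto
  show "(\<lambda>t. f t * \<phi> t) \<in> borel_measurable lborel"
    using assms(1,2) by (auto dest: borel_measurable_integrable)
  show "AE x in lborel. norm (f x * \<phi> x) \<le> norm (B * \<bar>f x\<bar>)"
    using assms(3) by (auto simp: abs_mult intro!: AE_I2)
      (smt (verit, best) abs_ge_zero mult.commute mult_right_mono)
qed

lemma conv_deriv:
  fixes f \<phi> :: "real \<Rightarrow> real"
  assumes d: "\<And>x. f differentiable (at x)" and fi: "integrable lborel f"
    and dfi: "integrable lborel (deriv f)"
    and \<phi>m[measurable]: "\<phi> \<in> borel_measurable borel" and \<phi>c: "\<And>x. isCont \<phi> x"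
    and \<phi>b: "\<And>x. \<bar>\<phi> x\<bar> \<le> B"
  shows "((\<lambda>z. \<integral>t. f (z - t) * \<phi> t \<partial>lborel) has_real_derivative
            (\<integral>t. deriv f (z - t) * \<phi> t \<partial>lborel)) (at z)"
proof -
  have dfm[measurable]: "deriv f \<in> borel_measurable borel" using d by (rule deriv_measurable)
  have DER: "(f has_real_derivative deriv f x) (at x)" for x
    using d DERIV_deriv_iff_real_differentiable by blast
  have B0: "0 \<le> B" using \<phi>b[of 0] by linarith
  define C where "C u = (\<integral>t. f (u - t) * \<phi> t \<partial>lborel)" for u
  define G where "G x = (\<integral>t. deriv f (x - t) * \<phi> t \<partial>lborel)" for x
  have G_alt: "G x = (\<integral>s. deriv f s * \<phi> (x - s) \<partial>lborel)" for x
    unfolding G_def using trans_integral[of "\<lambda>t. deriv f (x - t) * \<phi> t" x] by simp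
  have Gc: "isCont G x" for x
  proof (rule continuous_at_sequentiallyI)
    fix u assume u: "u \<longlonglongrightarrow> x"
    show "(\<lambda>n. G (u n)) \<longlonglongrightarrow> G x"
      unfolding G_alt
    proof (rule integral_dominated_convergence[where w="\<lambda>s. \<bar>deriv f s\<bar> * B"])
      show "integrable lborel (\<lambda>s. \<bar>deriv f s\<bar> * B)" using dfi by auto
      show "AE s in lborel. (\<lambda>n. deriv f s * \<phi> (u n - s)) \<longlonglongrightarrow> deriv f s * \<phi> (x - s)"
        using u \<phi>c by (intro AE_I2 tendsto_mult tendsto_const isCont_tendsto_compose[OF \<phi>c] tendsto_diff)
      show "AE s in lborel. norm (deriv f s * \<phi> (u n - s)) \<le> \<bar>deriv f s\<bar> * B" for n
        using \<phi>b by (auto intro!: AE_I2 mult_left_mono simp: abs_mult)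
    qed auto
  qed
  have Cint: "integrable lborel (\<lambda>t. f (u - t) * \<phi> t)" for u
    by (rule integrable_bdd_mult[OF trans_integrable[OF fi] \<phi>m \<phi>b])
  have step: "C u - C c = (\<integral>x\<in>{c..u}. G x \<partial>lborel)" if cu: "c \<le> u" for c u
  proof -
    have ftc_t: "f (u - t) - f (c - t) = (\<integral>x\<in>{c..u}. deriv f (x - t) \<partial>lborel)" for t
    proof (rule ftc_lebesgue[symmetric, OF cu])
      show "((\<lambda>x. f (x - t)) has_real_derivative deriv f (x - t)) (at x)" for x
      proof -
        have "((\<lambda>x. x - t) has_real_derivative 1) (at x)" by (auto intro!: derivative_eq_intros)
        from DERIV_chain2[OF DER this] show ?thesis by simp
      qed
      have "integrable lborel (\<lambda>x. deriv f (x - t))"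
        using lborel_integrable_real_affine[OF dfi, of 1 "-t"] by simp
      then show "set_integrable lborel {c..u} (\<lambda>x. deriv f (x - t))"
        unfolding set_integrable_def by (intro integrable_mult_indicator) auto
    qed
    have "C u - C c = (\<integral>t. (f (u - t) - f (c - t)) * \<phi> t \<partial>lborel)"
      unfolding C_def using Cint[of u] Cint[of c] by (simp add: left_diff_distrib)
    also have "\<dots> = (\<integral>t. (\<integral>x. indicator {c..u} x * deriv f (x - t) * \<phi> t \<partial>lborel) \<partial>lborel)"
      unfolding ftc_t set_lebesgue_integral_def by simp
    also have "\<dots> = (\<integral>x. (\<integral>t. indicator {c..u} x * deriv f (x - t) * \<phi> t \<partial>lborel) \<partial>lborel)"
    proof (rule lborel_pair.Fubini_integral)
      let ?F = "\<lambda>(x, t). indicator {c..u} x * deriv f (x - t) * \<phi> t :: real"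
      have K: "integrable lborel (\<lambda>t. deriv f (x - t) * \<phi> t)" for x
        by (rule integrable_bdd_mult[OF trans_integrable[OF dfi] \<phi>m \<phi>b])
      show "integrable (lborel \<Otimes>\<^sub>M lborel) ?F"
      proof (rule lborel_pair.Fubini_integrable)
        show "?F \<in> borel_measurable (lborel \<Otimes>\<^sub>M lborel)" by measurable
        show "AE x in lborel. integrable lborel (\<lambda>t. ?F (x, t))"
          using K by (auto intro!: AE_I2 simp: mult.assoc)
        show "integrable lborel (\<lambda>x. \<integral>t. norm (?F (x, t)) \<partial>lborel)"
        proof (rule Bochner_Integration.integrable_bound[where f="\<lambda>x. indicator {c..u} x *\<^sub>R ((\<integral>s. \<bar>deriv f s\<bar> \<partial>lborel) * B)"])
          show "integrable lborel (\<lambda>x. indicator {c..u} x *\<^sub>R ((\<integral>s. \<bar>deriv f s\<bar> \<partial>lborel) * B))"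
            by (rule integrableI_bounded_set_indicator[where B="\<bar>(\<integral>s. \<bar>deriv f s\<bar> \<partial>lborel) * B\<bar>"]) (auto simp: emeasure_lborel_Icc_eq)
          show "(\<lambda>x. \<integral>t. norm (?F (x, t)) \<partial>lborel) \<in> borel_measurable lborel"
            by measurable
          show "AE x in lborel. norm (\<integral>t. norm (?F (x, t)) \<partial>lborel)
               \<le> norm (indicator {c..u} x *\<^sub>R ((\<integral>s. \<bar>deriv f s\<bar> \<partial>lborel) * B))"
          proof (rule AE_I2)
            fix x
            have "(\<integral>t. norm (?F (x, t)) \<partial>lborel) = indicator {c..u} x * (\<integral>t. \<bar>deriv f (x - t) * \<phi> t\<bar> \<partial>lborel)"
              by (simp add: abs_mult indicator_def mult.assoc)
            also have "(\<integral>t. \<bar>deriv f (x - t) * \<phi> t\<bar> \<partial>lborel) \<le> (\<integral>t. \<bar>deriv f (x - t)\<bar> * B \<partial>lborel)"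
              using integrable_abs[OF K[of x]] trans_integrable[OF dfi, of x] \<phi>b
              by (intro integral_mono) (auto simp: abs_mult intro!: mult_left_mono)
            also have "(\<integral>t. \<bar>deriv f (x - t)\<bar> * B \<partial>lborel) = (\<integral>s. \<bar>deriv f s\<bar> \<partial>lborel) * B"
              using trans_integral[of "\<lambda>s. \<bar>deriv f s\<bar>" x] by simp
            finally show "norm (\<integral>t. norm (?F (x, t)) \<partial>lborel)
               \<le> norm (indicator {c..u} x *\<^sub>R ((\<integral>s. \<bar>deriv f s\<bar> \<partial>lborel) * B))"
              using B0 by (auto simp: indicator_def)
          qed
        qed
      qed
    qed
    also have "\<dots> = (\<integral>x\<in>{c..u}. G x \<partial>lborel)"
      unfolding set_lebesgue_integral_def G_def by (simp add: mult.assoc)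
    finally show ?thesis .
  qed
  have Ceq: "C u = C (z - 1) + (LBINT x=z - 1..u. G x)" for u
  proof (cases "z - 1 \<le> u")
    case True then show ?thesis using step[OF True] by (simp add: interval_integral_Icc)
  next
    case False
    then have "u \<le> z - 1" by simp
    then show ?thesis using step[of u "z - 1"]
      by (subst interval_integral_endpoints_reverse) (simp add: interval_integral_Icc)
  qed
  have "((\<lambda>u. LBINT x=z - 1..u. G x) has_vector_derivative G z) (at z within {z - 1..z + 1})"
    by (rule interval_integral_FTC2) (auto intro: continuous_at_imp_continuous_on Gc)
  then have "((\<lambda>u. LBINT x=z - 1..u. G x) has_vector_derivative G z) (at z)"
    by (subst (asm) at_within_interior) auto
  then have "((\<lambda>u. C (z - 1) + (LBINT x=z - 1..u. G x)) has_real_derivative G z) (at z)"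
    by (auto simp: has_real_derivative_iff_has_vector_derivative intro!: derivative_eq_intros)
  moreover have "(\<lambda>u. C (z - 1) + (LBINT x=z - 1..u. G x)) = C" by (rule ext) (rule Ceq[symmetric])
  ultimately have "(C has_real_derivative G z) (at z)" by (simp only:)
  then show ?thesis unfolding C_def G_def .
qed



lemma trans_nn2:
  fixes f :: "real \<Rightarrow> ennreal"
  assumes "f \<in> borel_measurable borel"
  shows "(\<integral>\<^sup>+t. f (t - u) \<partial>lborel) = (\<integral>\<^sup>+t. f t \<partial>lborel)"
  using nn_integral_real_affine[OF assms, of 1 "-u"] by simp

context nicef begin

lemma integral_deriv_zero: "(\<integral>x. deriv g x \<partial>lborel) = 0"
proof -
  have D1: "((\<lambda>z. \<integral>t. g (z - t) * 1 \<partial>lborel) has_real_derivative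
            (\<integral>t. deriv g (0 - t) * 1 \<partial>lborel)) (at 0)"
    by (rule conv_deriv[OF d int dint, of "\<lambda>_. 1" 1]) auto
  have "(\<lambda>z. \<integral>t. g (z - t) * 1 \<partial>lborel) = (\<lambda>z. \<integral>t. g t \<partial>lborel)"
    using trans_integral[of g] by simp
  moreover have "(\<integral>t. deriv g (0 - t) * 1 \<partial>lborel) = (\<integral>x. deriv g x \<partial>lborel)"
    using trans_integral[of "deriv g" 0] by simp
  ultimately have "((\<lambda>z. \<integral>t. g t \<partial>lborel) has_real_derivative (\<integral>x. deriv g x \<partial>lborel)) (at 0)"
    using D1 by metis
  moreover have "((\<lambda>z. \<integral>t. g t \<partial>lborel) has_real_derivative 0) (at 0)" by simp
  ultimately show ?thesis using DERIV_unique by blast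
qed

lemma fisher_int: "integrable lborel (\<lambda>x. (deriv g x)\<^sup>2 / g x)"
  unfolding integrable_iff_bounded using fin2 nn by simp

lemma quad:
  assumes pos: "\<And>x. g x > 0"
  shows "(\<integral>\<^sup>+t. ennreal ((c + b * (deriv g t / g t))\<^sup>2 * g t) \<partial>lborel)
       = ennreal (c\<^sup>2 * (\<integral>t. g t \<partial>lborel) + b\<^sup>2 * (\<integral>t. (deriv g t)\<^sup>2 / g t \<partial>lborel))"
proof -
  have eq: "(c + b * (deriv g t / g t))\<^sup>2 * g t
      = c\<^sup>2 * g t + (2 * c * b) * deriv g t + b\<^sup>2 * ((deriv g t)\<^sup>2 / g t)" for t
    using pos[of t] by (simp add: field_simps power2_eq_square)
  have I: "integrable lborel (\<lambda>t. c\<^sup>2 * g t + (2 * c * b) * deriv g t + b\<^sup>2 * ((deriv g t)\<^sup>2 / g t))"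
    using int dint fisher_int by (intro Bochner_Integration.integrable_add integrable_mult_right) auto
  have "(\<integral>\<^sup>+t. ennreal ((c + b * (deriv g t / g t))\<^sup>2 * g t) \<partial>lborel)
     = ennreal (\<integral>t. c\<^sup>2 * g t + (2 * c * b) * deriv g t + b\<^sup>2 * ((deriv g t)\<^sup>2 / g t) \<partial>lborel)"
    unfolding eq[symmetric]
    by (rule nn_integral_eq_integral) (use I eq[symmetric] pos in \<open>auto intro!: AE_I2 mult_nonneg_nonneg simp: less_imp_le[OF pos]\<close>)
  also have "(\<integral>t. c\<^sup>2 * g t + (2 * c * b) * deriv g t + b\<^sup>2 * ((deriv g t)\<^sup>2 / g t) \<partial>lborel)
     = c\<^sup>2 * (\<integral>t. g t \<partial>lborel) + b\<^sup>2 * (\<integral>t. (deriv g t)\<^sup>2 / g t \<partial>lborel)"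
  proof -
    have i1: "integrable lborel (\<lambda>t. c\<^sup>2 * g t)" using int by simp
    have i2: "integrable lborel (\<lambda>t. (2 * c * b) * deriv g t)" using dint by simp
    have i3: "integrable lborel (\<lambda>t. b\<^sup>2 * ((deriv g t)\<^sup>2 / g t))" using fisher_int by (rule integrable_mult_right)
    show ?thesis
      by (simp only: Bochner_Integration.integral_add[OF Bochner_Integration.integrable_add[OF i1 i2] i3]
          Bochner_Integration.integral_add[OF i1 i2] integral_mult_right_zero integral_deriv_zero)
  qed
  finally show ?thesis .
qed

end

lemma cs_ratio:
  fixes h w :: "real \<Rightarrow> real"
  assumes wn: "\<And>s. w s \<ge> 0" and wi: "integrable lborel w"
    and hm[measurable]: "h \<in> borel_measurable borel"
  shows "ennreal ((\<integral>s. h s * w s \<partial>lborel)\<^sup>2 / (\<integral>s. w s \<partial>lborel))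
         \<le> (\<integral>\<^sup>+s. ennreal ((h s)\<^sup>2 * w s) \<partial>lborel)"
proof -
  have wm[measurable]: "w \<in> borel_measurable borel" using wi by (auto dest: borel_measurable_integrable)
  define X where "X = (\<integral>\<^sup>+s. ennreal ((h s)\<^sup>2 * w s) \<partial>lborel)"
  define W where "W = (\<integral>s. w s \<partial>lborel)"
  define I where "I = (\<integral>s. h s * w s \<partial>lborel)"
  have W0: "W \<ge> 0" unfolding W_def using wn by auto
  have Wn: "(\<integral>\<^sup>+s. ennreal (w s) \<partial>lborel) = ennreal W"
    unfolding W_def by (rule nn_integral_eq_integral) (use wi wn in auto)
  show ?thesis
  proof (cases "X = \<infinity> \<or> W = 0")
    case True then show ?thesis unfolding X_def[symmetric] W_def[symmetric] by auto
  next
    case False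
    then have Wp: "W > 0" and Xf: "X < \<infinity>" using W0 by (auto simp: less_top)
    have "ennreal \<bar>I\<bar> \<le> (\<integral>\<^sup>+s. ennreal (norm (h s * w s)) \<partial>lborel)"
    proof (cases "integrable lborel (\<lambda>s. h s * w s)")
      case True then show ?thesis unfolding I_def using integral_norm_bound_ennreal[OF True] by simp
    next
      case False then show ?thesis unfolding I_def by (simp add: not_integrable_integral_eq)
    qed
    also have "\<dots> = (\<integral>\<^sup>+s. ennreal (\<bar>h s\<bar> * sqrt (w s)) * ennreal (sqrt (w s)) \<partial>lborel)"
      by (intro nn_integral_cong)
        (auto simp: ennreal_mult[symmetric] abs_mult mult.assoc wn real_sqrt_mult[symmetric] abs_of_nonneg)
    finally have "(ennreal \<bar>I\<bar>)\<^sup>2 \<le> (\<integral>\<^sup>+s. ennreal (\<bar>h s\<bar> * sqrt (w s)) * ennreal (sqrt (w s)) \<partial>lborel)\<^sup>2"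
      by (intro power_mono) auto
    also have "\<dots> \<le> (\<integral>\<^sup>+s. ennreal (\<bar>h s\<bar> * sqrt (w s)) ^ 2 \<partial>lborel) * (\<integral>\<^sup>+s. ennreal (sqrt (w s)) ^ 2 \<partial>lborel)"
      by (rule Cauchy_Schwarz_nn_integral) auto
    also have "(\<integral>\<^sup>+s. ennreal (\<bar>h s\<bar> * sqrt (w s)) ^ 2 \<partial>lborel) = X"
      unfolding X_def
      by (intro nn_integral_cong) (auto simp: ennreal_power power_mult_distrib wn)
    also have "(\<integral>\<^sup>+s. ennreal (sqrt (w s)) ^ 2 \<partial>lborel) = ennreal W"
      unfolding Wn[symmetric] by (intro nn_integral_cong) (auto simp: ennreal_power wn)
    finally have le: "ennreal (I\<^sup>2) \<le> X * ennreal W" by (simp add: ennreal_power)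
    obtain x where x: "X = ennreal x" "x \<ge> 0" using Xf by (cases X) auto
    have "I\<^sup>2 \<le> x * W" using le x W0 by (simp add: ennreal_mult[symmetric])
    then have "I\<^sup>2 / W \<le> x" using Wp by (simp add: divide_le_eq mult.commute)
    then show ?thesis unfolding X_def[symmetric] W_def[symmetric] I_def[symmetric] x by (simp add: ennreal_leI)
  qed
qed



lemma perY:
  fixes q p :: "real \<Rightarrow> real" and a b :: real
  assumes q: "nicef q" and p: "nicef p" and ppos: "\<And>x. p x > 0"
    and p1: "(\<integral>t. p t \<partial>lborel) = 1" and ab: "a + b = 1"
  shows "\<And>z. ((\<lambda>z. \<integral>s. q s * p (z - s) \<partial>lborel) has_real_derivative
              (\<integral>s. a * deriv q s * p (z - s) + b * q s * deriv p (z - s) \<partial>lborel)) (at z)"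
    and "(\<integral>\<^sup>+z. ennreal ((\<integral>s. a * deriv q s * p (z - s) + b * q s * deriv p (z - s) \<partial>lborel)\<^sup>2
                  / (\<integral>s. q s * p (z - s) \<partial>lborel)) \<partial>lborel)
         \<le> ennreal (a\<^sup>2) * (\<integral>\<^sup>+s. ennreal ((deriv q s)\<^sup>2 / q s) \<partial>lborel)
           + ennreal (b\<^sup>2 * (\<integral>t. (deriv p t)\<^sup>2 / p t \<partial>lborel)) * (\<integral>\<^sup>+s. ennreal (q s) \<partial>lborel)"
proof -
  interpret q: nicef q by (rule q)
  interpret p: nicef p by (rule p)
  define r where "r z = (\<integral>s. q s * p (z - s) \<partial>lborel)" for z
  define R where "R z = (\<integral>s. a * deriv q s * p (z - s) + b * q s * deriv p (z - s) \<partial>lborel)" for z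
  define R1 where "R1 z = (\<integral>s. deriv q s * p (z - s) \<partial>lborel)" for z
  define R2 where "R2 z = (\<integral>s. q s * deriv p (z - s) \<partial>lborel)" for z
  obtain Bq where Bq: "\<And>x. \<bar>q x\<bar> \<le> Bq" using q.bounded by blast
  obtain Bp where Bp: "\<And>x. \<bar>p x\<bar> \<le> Bp" using p.bounded by blast
  have Bp': "\<bar>p (z - x)\<bar> \<le> Bp" for z x using Bp by blast
  have pz[measurable]: "(\<lambda>s. p (z - s)) \<in> borel_measurable borel" for z by measurable
  have dpz[measurable]: "(\<lambda>s. deriv p (z - s)) \<in> borel_measurable borel" for z by measurable
  have i1: "integrable lborel (\<lambda>s. deriv q s * p (z - s))" for z
    by (rule integrable_bdd_mult[OF q.dint pz Bp'])
  have i2: "integrable lborel (\<lambda>s. q s * deriv p (z - s))" for z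
    using integrable_bdd_mult[OF trans_integrable[OF p.dint, of z] q.meas Bq] by (simp add: mult.commute)
  have iw: "integrable lborel (\<lambda>s. q s * p (z - s))" for z
    by (rule integrable_bdd_mult[OF q.int pz Bp'])
  have D2: "(r has_real_derivative R2 z) (at z)" for z
  proof -
    have "((\<lambda>z. \<integral>t. p (z - t) * q t \<partial>lborel) has_real_derivative (\<integral>t. deriv p (z - t) * q t \<partial>lborel)) (at z)"
      by (rule conv_deriv[OF p.d p.int p.dint q.meas q.isCont Bq])
    then show ?thesis unfolding r_def R2_def by (simp add: mult.commute)
  qed
  have D1: "(r has_real_derivative R1 z) (at z)" for z
  proof -
    have "((\<lambda>z. \<integral>t. q (z - t) * p t \<partial>lborel) has_real_derivative (\<integral>t. deriv q (z - t) * p t \<partial>lborel)) (at z)"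
      by (rule conv_deriv[OF q.d q.int q.dint p.meas p.isCont Bp])
    moreover have "(\<integral>t. q (z - t) * p t \<partial>lborel) = r z" for z
      unfolding r_def using trans_integral[of "\<lambda>t. q (z - t) * p t" z] by simp
    then have "(\<lambda>z. \<integral>t. q (z - t) * p t \<partial>lborel) = r" by auto
    moreover have "(\<integral>t. deriv q (z - t) * p t \<partial>lborel) = R1 z"
      unfolding R1_def using trans_integral[of "\<lambda>t. deriv q (z - t) * p t" z] by simp
    ultimately show ?thesis by simp
  qed
  have R12: "R1 z = R2 z" for z using D1 D2 DERIV_unique by blast
  have RR1: "R z = R1 z" for z
  proof -
    have "R z = a * R1 z + b * R2 z"
      unfolding R_def R1_def R2_def
      using integrable_mult_right[OF i1, of a z] integrable_mult_right[OF i2, of b z]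
      by (simp add: mult.assoc)
    then show ?thesis using R12[of z] ab by (simp add: algebra_simps)
           (metis add_diff_cancel_left' mult.commute mult_1 ring_class.ring_distribs(1))
  qed
  have DR: "(r has_real_derivative R z) (at z)" for z using D1 RR1 by simp
  then show "\<And>z. ((\<lambda>z. \<integral>s. q s * p (z - s) \<partial>lborel) has_real_derivative
              (\<integral>s. a * deriv q s * p (z - s) + b * q s * deriv p (z - s) \<partial>lborel)) (at z)"
    unfolding r_def[abs_def] R_def .
  define u where "u s = deriv q s / q s" for s
  define v where "v t = deriv p t / p t" for t
  define J where "J = (\<integral>t. (deriv p t)\<^sup>2 / p t \<partial>lborel)"
  have J0: "J \<ge> 0" unfolding J_def by (intro integral_nonneg_AE AE_I2 divide_nonneg_nonneg) (auto simp: less_imp_le[OF ppos])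
  have um[measurable]: "u \<in> borel_measurable borel" unfolding u_def by measurable
  have vm[measurable]: "v \<in> borel_measurable borel" unfolding v_def by measurable
  have pw: "a * deriv q s * p (z - s) + b * q s * deriv p (z - s)
        = (a * u s + b * v (z - s)) * (q s * p (z - s))" for s z
  proof (cases "q s = 0")
    case True then show ?thesis using deriv_zero_at_zero[OF q.d q.nn True] by simp
  next
    case False then show ?thesis using ppos[of "z - s"] unfolding u_def v_def by (simp add: field_simps)
  qed
  have wn: "0 \<le> q s * p (z - s)" for s z using q.nn[of s] ppos[of "z - s"] by simp
  have pt: "ennreal ((R z)\<^sup>2 / r z) \<le> (\<integral>\<^sup>+s. ennreal ((a * u s + b * v (z - s))\<^sup>2 * (q s * p (z - s))) \<partial>lborel)" for z
  proof -
    show ?thesis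
      unfolding R_def r_def pw
      by (rule cs_ratio) (use iw wn in auto)
  qed
  have inner: "(\<integral>\<^sup>+z. ennreal ((a * u s + b * v (z - s))\<^sup>2 * (q s * p (z - s))) \<partial>lborel)
       = ennreal (a\<^sup>2 * ((deriv q s)\<^sup>2 / q s)) + ennreal (b\<^sup>2 * J) * ennreal (q s)" for s
  proof -
    have "(\<integral>\<^sup>+z. ennreal ((a * u s + b * v (z - s))\<^sup>2 * (q s * p (z - s))) \<partial>lborel)
        = (\<integral>\<^sup>+z. ennreal (q s) * ennreal ((a * u s + b * v (z - s))\<^sup>2 * p (z - s)) \<partial>lborel)"
      by (intro nn_integral_cong)
        (simp add: ennreal_mult[symmetric] q.nn less_imp_le[OF ppos] mult.assoc mult.left_commute)
    also have "\<dots> = ennreal (q s) * (\<integral>\<^sup>+z. ennreal ((a * u s + b * v (z - s))\<^sup>2 * p (z - s)) \<partial>lborel)"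
      by (rule nn_integral_cmult) measurable
    also have "(\<integral>\<^sup>+z. ennreal ((a * u s + b * v (z - s))\<^sup>2 * p (z - s)) \<partial>lborel)
        = (\<integral>\<^sup>+t. ennreal ((a * u s + b * v t)\<^sup>2 * p t) \<partial>lborel)"
      by (rule trans_nn2[of "\<lambda>t. ennreal ((a * u s + b * v t)\<^sup>2 * p t)"]) measurable
    also have "\<dots> = ennreal ((a * u s)\<^sup>2 * 1 + b\<^sup>2 * J)"
      using p.quad[OF ppos, of "a * u s" b] unfolding v_def J_def p1 .
    also have "ennreal (q s) * ennreal ((a * u s)\<^sup>2 * 1 + b\<^sup>2 * J)
        = ennreal (a\<^sup>2 * ((deriv q s)\<^sup>2 / q s)) + ennreal (b\<^sup>2 * J) * ennreal (q s)"
    proof -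
      have "q s * ((a * u s)\<^sup>2 * 1 + b\<^sup>2 * J) = a\<^sup>2 * ((deriv q s)\<^sup>2 / q s) + b\<^sup>2 * J * q s"
        unfolding u_def by (cases "q s = 0") (simp_all add: field_simps power2_eq_square)
      moreover have "0 \<le> a\<^sup>2 * ((deriv q s)\<^sup>2 / q s)" using q.nn[of s] by simp
      moreover have "0 \<le> b\<^sup>2 * J * q s" using q.nn[of s] J0 by simp
      ultimately show ?thesis using q.nn[of s] J0
        by (simp add: ennreal_mult[symmetric] ennreal_plus[symmetric] del: ennreal_plus)
    qed
    finally show ?thesis .
  qed
  have "(\<integral>\<^sup>+z. ennreal ((R z)\<^sup>2 / r z) \<partial>lborel)
      \<le> (\<integral>\<^sup>+z. (\<integral>\<^sup>+s. ennreal ((a * u s + b * v (z - s))\<^sup>2 * (q s * p (z - s))) \<partial>lborel) \<partial>lborel)"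
    by (intro nn_integral_mono pt)
  also have "\<dots> = (\<integral>\<^sup>+s. (\<integral>\<^sup>+z. ennreal ((a * u s + b * v (z - s))\<^sup>2 * (q s * p (z - s))) \<partial>lborel) \<partial>lborel)"
    by (rule lborel_pair.Fubini') measurable
  also have "\<dots> = (\<integral>\<^sup>+s. ennreal (a\<^sup>2 * ((deriv q s)\<^sup>2 / q s)) + ennreal (b\<^sup>2 * J) * ennreal (q s) \<partial>lborel)"
    using inner by simp
  also have "\<dots> = ennreal (a\<^sup>2) * (\<integral>\<^sup>+s. ennreal ((deriv q s)\<^sup>2 / q s) \<partial>lborel)
           + ennreal (b\<^sup>2 * J) * (\<integral>\<^sup>+s. ennreal (q s) \<partial>lborel)"
  proof -
    have e1: "(\<integral>\<^sup>+s. ennreal (a\<^sup>2 * ((deriv q s)\<^sup>2 / q s)) \<partial>lborel)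
        = (\<integral>\<^sup>+s. ennreal (a\<^sup>2) * ennreal ((deriv q s)\<^sup>2 / q s) \<partial>lborel)"
      using q.nn by (intro nn_integral_cong) (simp add: ennreal_mult[symmetric] del: ennreal_mult)
    have e2: "(\<integral>\<^sup>+s. ennreal (a\<^sup>2) * ennreal ((deriv q s)\<^sup>2 / q s) + ennreal (b\<^sup>2 * J) * ennreal (q s) \<partial>lborel)
       = (\<integral>\<^sup>+s. ennreal (a\<^sup>2) * ennreal ((deriv q s)\<^sup>2 / q s) \<partial>lborel) + (\<integral>\<^sup>+s. ennreal (b\<^sup>2 * J) * ennreal (q s) \<partial>lborel)"
      by (rule nn_integral_add) auto
    have e3: "(\<integral>\<^sup>+s. ennreal (a\<^sup>2) * ennreal ((deriv q s)\<^sup>2 / q s) \<partial>lborel) = ennreal (a\<^sup>2) * (\<integral>\<^sup>+s. ennreal ((deriv q s)\<^sup>2 / q s) \<partial>lborel)"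
      by (rule nn_integral_cmult) auto
    have e4: "(\<integral>\<^sup>+s. ennreal (b\<^sup>2 * J) * ennreal (q s) \<partial>lborel) = ennreal (b\<^sup>2 * J) * (\<integral>\<^sup>+s. ennreal (q s) \<partial>lborel)"
      by (rule nn_integral_cmult) auto
    have e0: "(\<integral>\<^sup>+s. ennreal (a\<^sup>2 * ((deriv q s)\<^sup>2 / q s)) + ennreal (b\<^sup>2 * J) * ennreal (q s) \<partial>lborel)
       = (\<integral>\<^sup>+s. ennreal (a\<^sup>2) * ennreal ((deriv q s)\<^sup>2 / q s) + ennreal (b\<^sup>2 * J) * ennreal (q s) \<partial>lborel)"
      using q.nn by (intro nn_integral_cong) (simp add: ennreal_mult[symmetric] del: ennreal_mult)
    show ?thesis unfolding e0 e2 e3 e4 ..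

  qed
  finally show "(\<integral>\<^sup>+z. ennreal ((\<integral>s. a * deriv q s * p (z - s) + b * q s * deriv p (z - s) \<partial>lborel)\<^sup>2
                  / (\<integral>s. q s * p (z - s) \<partial>lborel)) \<partial>lborel)
         \<le> ennreal (a\<^sup>2) * (\<integral>\<^sup>+s. ennreal ((deriv q s)\<^sup>2 / q s) \<partial>lborel)
           + ennreal (b\<^sup>2 * (\<integral>t. (deriv p t)\<^sup>2 / p t \<partial>lborel)) * (\<integral>\<^sup>+s. ennreal (q s) \<partial>lborel)"
    unfolding R_def r_def J_def .
qed



lemma deriv_limseq:
  fixes g :: "real \<Rightarrow> real"
  assumes d: "g differentiable (at x)"
  shows "(\<lambda>i. (g (x + 1 / Suc i) - g x) * Suc i) \<longlonglongrightarrow> deriv g x"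
proof -
  have D: "(g has_real_derivative deriv g x) (at x)"
    using d DERIV_deriv_iff_real_differentiable by blast
  then have "((\<lambda>h. (g (x + h) - g x) / h) \<longlongrightarrow> deriv g x) (at 0)"
    using DERIV_def by blast
  moreover have "filterlim (\<lambda>i::nat. 1 / real (Suc i)) (at 0) sequentially"
  proof (rule filterlim_atI)
    show "(\<lambda>i::nat. 1 / real (Suc i)) \<longlonglongrightarrow> 0"
      using LIMSEQ_inverse_real_of_nat by (simp add: inverse_eq_divide)
  qed auto
  ultimately have "(\<lambda>i::nat. (g (x + 1 / Suc i) - g x) / (1 / Suc i)) \<longlonglongrightarrow> deriv g x"
    using filterlim_compose by fastforce
  then show ?thesis by simp
qed

theorem lemma4:
  fixes k :: nat
    and p1 :: "real \<times> (nat \<Rightarrow> real) \<Rightarrow> real"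
    and p2 :: "real \<Rightarrow> real"
  assumes p1_meas: "p1 \<in> borel_measurable (lborel \<Otimes>\<^sub>M Rk k)"
    and p1_nonneg: "\<And>z. p1 z \<ge> 0"
    and p1_prob: "(\<integral>\<^sup>+ z. ennreal (p1 z) \<partial>(lborel \<Otimes>\<^sub>M Rk k)) = 1"
    and p1_diff: "\<And>x1 x3. (\<lambda>s. p1 (s, x3)) differentiable (at x1)"
    and J1_fin: "fisher_shift (Rk k) p1 < \<infinity>"
    and J1_pos: "fisher_shift (Rk k) p1 > 0"
    and p2_meas: "p2 \<in> borel_measurable lborel"
    and p2_pos: "\<And>x. p2 x > 0"
    and p2_prob: "(\<integral>\<^sup>+ x. ennreal (p2 x) \<partial>lborel) = 1"
    and p2_diff: "\<And>x. p2 differentiable (at x)"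
    and J2_fin: "fisher_shift1 p2 < \<infinity>"
    and J2_pos: "fisher_shift1 p2 > 0"
  shows "1 / fisher_shift (Rk k) (conv_first p1 p2)
           \<ge> 1 / fisher_shift (Rk k) p1 + 1 / fisher_shift1 p2"
proof -
  note p1m[measurable] = p1_meas
  have sfR: "sigma_finite_measure (Rk k)" unfolding Rk_def
    by (rule product_sigma_finite.sigma_finite)
       (auto simp: product_sigma_finite_def lborel.sigma_finite_measure_axioms)
  interpret P: pair_sigma_finite lborel "Rk k"
    by (intro pair_sigma_finite.intro lborel.sigma_finite_measure_axioms sfR)
  define D where "D s y = deriv (\<lambda>s. p1 (s, y)) s" for s y
  have Dm[measurable]: "(\<lambda>z. D (fst z) (snd z)) \<in> borel_measurable (lborel \<Otimes>\<^sub>M Rk k)"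
  proof (rule borel_measurable_LIMSEQ_real)
    show "(\<lambda>z. (p1 (fst z + 1 / Suc i, snd z) - p1 z) * Suc i) \<in> borel_measurable (lborel \<Otimes>\<^sub>M Rk k)" for i
      by measurable
    show "(\<lambda>i. (p1 (fst z + 1 / Suc i, snd z) - p1 z) * Suc i) \<longlonglongrightarrow> D (fst z) (snd z)" for z
      using deriv_limseq[OF p1_diff] unfolding D_def by (cases z) simp
  qed
  have Dm2[measurable]: "(\<lambda>(y, s). D s y) \<in> borel_measurable (Rk k \<Otimes>\<^sub>M lborel)"
    using measurable_pair_swap[OF Dm] by (simp add: split_beta')
  have p1m2[measurable]: "(\<lambda>(y, s). p1 (s, y)) \<in> borel_measurable (Rk k \<Otimes>\<^sub>M lborel)"
    using measurable_pair_swap[OF p1m] by (simp add: split_beta')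
  define A where "A y = (\<integral>\<^sup>+s. ennreal ((D s y)\<^sup>2 / p1 (s, y)) \<partial>lborel)" for y
  define Mq where "Mq y = (\<integral>\<^sup>+s. ennreal (p1 (s, y)) \<partial>lborel)" for y
  have Am[measurable]: "A \<in> borel_measurable (Rk k)" unfolding A_def by measurable
  have Mqm[measurable]: "Mq \<in> borel_measurable (Rk k)" unfolding Mq_def by measurable
  have J1eq: "fisher_shift (Rk k) p1 = (\<integral>\<^sup>+y. A y \<partial>Rk k)"
  proof -
    have "fisher_shift (Rk k) p1 = (\<integral>\<^sup>+z. ennreal ((D (fst z) (snd z))\<^sup>2 / p1 (fst z, snd z)) \<partial>(lborel \<Otimes>\<^sub>M Rk k))"
      unfolding fisher_shift_def D_def
      by (intro nn_integral_cong) (simp add: deriv_shift0[OF p1_diff])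
    also have "\<dots> = (\<integral>\<^sup>+y. A y \<partial>Rk k)"
      unfolding A_def using P.nn_integral_snd[of "\<lambda>z. ennreal ((D (fst z) (snd z))\<^sup>2 / p1 (fst z, snd z))"] by simp
    finally show ?thesis .
  qed
  have M1eq: "(\<integral>\<^sup>+y. Mq y \<partial>Rk k) = 1"
  proof -
    have "(\<integral>\<^sup>+y. Mq y \<partial>Rk k) = (\<integral>\<^sup>+z. ennreal (p1 (fst z, snd z)) \<partial>(lborel \<Otimes>\<^sub>M Rk k))"
      unfolding Mq_def using P.nn_integral_snd[of "\<lambda>z. ennreal (p1 (fst z, snd z))"] by simp
    then show ?thesis using p1_prob by simp
  qed
  define G where "G y \<longleftrightarrow> Mq y < \<infinity> \<and> A y < \<infinity>" for y
  have AEG: "AE y in Rk k. G y"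
  proof -
    have "AE y in Rk k. Mq y \<noteq> \<infinity>"
      by (rule nn_integral_noteq_infinite) (use M1eq in auto)
    moreover have "AE y in Rk k. A y \<noteq> \<infinity>"
      by (rule nn_integral_noteq_infinite) (use J1eq J1_fin in auto)
    ultimately show ?thesis unfolding G_def by (auto simp: less_top)
  qed
  have niceq: "nicef (\<lambda>s. p1 (s, y))" if "G y" for y
  proof
    show "(\<lambda>s. p1 (s, y)) differentiable (at x)" for x by (rule p1_diff)
    show "0 \<le> p1 (x, y)" for x by (rule p1_nonneg)
    show "(\<integral>\<^sup>+x. ennreal (p1 (x, y)) \<partial>lborel) < \<infinity>" using that unfolding G_def Mq_def by simp
    show "(\<integral>\<^sup>+x. ennreal ((deriv (\<lambda>s. p1 (s, y)) x)\<^sup>2 / p1 (x, y)) \<partial>lborel) < \<infinity>"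
      using that unfolding G_def A_def D_def by simp
  qed
  have F2eq: "fisher_shift1 p2 = (\<integral>\<^sup>+x. ennreal ((deriv p2 x)\<^sup>2 / p2 x) \<partial>lborel)"
    unfolding fisher_shift1_def by (intro nn_integral_cong) (simp add: deriv_shift0[OF p2_diff])
  have nicep: "nicef p2"
  proof
    show "p2 differentiable (at x)" for x by (rule p2_diff)
    show "0 \<le> p2 x" for x using p2_pos[of x] by simp
    show "(\<integral>\<^sup>+x. ennreal (p2 x) \<partial>lborel) < \<infinity>" using p2_prob by simp
    show "(\<integral>\<^sup>+x. ennreal ((deriv p2 x)\<^sup>2 / p2 x) \<partial>lborel) < \<infinity>" using J2_fin F2eq by simp
  qed
  interpret p: nicef p2 by (rule nicep)
  define j2 where "j2 = (\<integral>t. (deriv p2 t)\<^sup>2 / p2 t \<partial>lborel)"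
  have F2j: "fisher_shift1 p2 = ennreal j2"
    unfolding F2eq j2_def
    by (rule nn_integral_eq_integral[OF p.fisher_int]) (auto intro!: AE_I2 divide_nonneg_nonneg p.nn)
  have p2int: "(\<integral>t. p2 t \<partial>lborel) = 1"
  proof -
    have "ennreal (\<integral>t. p2 t \<partial>lborel) = 1"
      using p2_prob nn_integral_eq_integral[OF p.int] p.nn by simp
    then show ?thesis by simp
  qed
  obtain j1 where j1: "fisher_shift (Rk k) p1 = ennreal j1" "j1 \<ge> 0"
    using J1_fin by (cases "fisher_shift (Rk k) p1") auto
  have j1p: "j1 > 0" using J1_pos j1 by (simp add: ennreal_less_zero_iff)
  have j2p: "j2 > 0" using J2_pos F2j by (simp add: ennreal_less_zero_iff)
  define a where "a = j2 / (j1 + j2)"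
  define b where "b = j1 / (j1 + j2)"
  have ab: "a + b = 1" unfolding a_def b_def using j1p j2p by (simp add: add_divide_distrib[symmetric])
  define r where "r = conv_first p1 p2"
  define R where "R z1 y = (\<integral>s. a * D s y * p2 (z1 - s) + b * p1 (s, y) * deriv p2 (z1 - s) \<partial>lborel)" for z1 y
  have rform: "r (z1, y) = (\<integral>s. p1 (s, y) * p2 (z1 - s) \<partial>lborel)" for z1 y
    unfolding r_def conv_first_def by simp
  have perY1: "((\<lambda>x. r (x, y)) has_real_derivative R z1 y) (at z1)" if "G y" for z1 y
    using perY(1)[OF niceq[OF that] nicep p2_pos p2int ab, of z1] unfolding rform R_def D_def .
  have perY2: "(\<integral>\<^sup>+z1. ennreal ((R z1 y)\<^sup>2 / r (z1, y)) \<partial>lborel)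
      \<le> ennreal (a\<^sup>2) * A y + ennreal (b\<^sup>2 * j2) * Mq y" if "G y" for y
    using perY(2)[OF niceq[OF that] nicep p2_pos p2int ab] unfolding rform R_def D_def A_def Mq_def j2_def .
  define H where "H z = (if G (snd z) then ennreal ((R (fst z) (snd z))\<^sup>2 / r z) else \<infinity>)" for z
  have Rm[measurable]: "(\<lambda>z. R (fst z) (snd z)) \<in> borel_measurable (lborel \<Otimes>\<^sub>M Rk k)"
    unfolding R_def by measurable
  have rm[measurable]: "r \<in> borel_measurable (lborel \<Otimes>\<^sub>M Rk k)"
  proof -
    have "(\<lambda>z. \<integral>s. p1 (s, snd z) * p2 (fst z - s) \<partial>lborel) \<in> borel_measurable (lborel \<Otimes>\<^sub>M Rk k)"
      by measurable
    moreover have "r = (\<lambda>z. \<integral>s. p1 (s, snd z) * p2 (fst z - s) \<partial>lborel)"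
      using rform by (auto simp: fun_eq_iff)
    ultimately show ?thesis by simp
  qed
  have Gm[measurable]: "Measurable.pred (Rk k) G" unfolding G_def by measurable
  have Hm[measurable]: "H \<in> borel_measurable (lborel \<Otimes>\<^sub>M Rk k)" unfolding H_def by measurable
  have le1: "fisher_shift (Rk k) (conv_first p1 p2) \<le> (\<integral>\<^sup>+z. H z \<partial>(lborel \<Otimes>\<^sub>M Rk k))"
    unfolding fisher_shift_def r_def[symmetric]
  proof (intro nn_integral_mono)
    fix z :: "real \<times> (nat \<Rightarrow> real)"
    obtain z1 y where z: "z = (z1, y)" by (cases z)
    show "ennreal ((deriv (\<lambda>\<tau>. r (fst z - \<tau>, snd z)) 0)\<^sup>2 / r z) \<le> H z"
    proof (cases "G y")
      case True
      have "(\<lambda>x. r (x, y)) differentiable (at z1)"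
        using perY1[OF True] real_differentiable_def by blast
      from deriv_shift0[OF this] perY1[OF True, THEN DERIV_imp_deriv]
      have "deriv (\<lambda>\<tau>. r (z1 - \<tau>, y)) 0 = - R z1 y" by simp
      then show ?thesis unfolding H_def z using True by simp
    qed (simp add: H_def z)
  qed
  also have "\<dots> = (\<integral>\<^sup>+y. (\<integral>\<^sup>+z1. H (z1, y) \<partial>lborel) \<partial>Rk k)"
    by (rule P.nn_integral_snd[symmetric]) measurable
  also have "\<dots> \<le> (\<integral>\<^sup>+y. ennreal (a\<^sup>2) * A y + ennreal (b\<^sup>2 * j2) * Mq y \<partial>Rk k)"
  proof (rule nn_integral_mono_AE)
    show "AE y in Rk k. (\<integral>\<^sup>+z1. H (z1, y) \<partial>lborel) \<le> ennreal (a\<^sup>2) * A y + ennreal (b\<^sup>2 * j2) * Mq y"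
      using AEG
    proof eventually_elim
      case (elim y)
      then show ?case using perY2[OF elim] unfolding H_def by simp
    qed
  qed
  also have "\<dots> = ennreal (a\<^sup>2) * (\<integral>\<^sup>+y. A y \<partial>Rk k) + ennreal (b\<^sup>2 * j2) * (\<integral>\<^sup>+y. Mq y \<partial>Rk k)"
    by (subst nn_integral_add) (auto simp: nn_integral_cmult)
  also have "\<dots> = ennreal (a\<^sup>2 * j1 + b\<^sup>2 * j2)"
    unfolding J1eq[symmetric] M1eq j1(1) using j1 j2p
    by (simp add: ennreal_mult[symmetric] ennreal_plus[symmetric] del: ennreal_plus)
  also have "a\<^sup>2 * j1 + b\<^sup>2 * j2 = j1 * j2 / (j1 + j2)"
  proof -
    have d: "j1 + j2 \<noteq> 0" using j1p j2p by simp
    have "a\<^sup>2 * j1 + b\<^sup>2 * j2 = (j2\<^sup>2 * j1 + j1\<^sup>2 * j2) / (j1 + j2)\<^sup>2"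
      unfolding a_def b_def by (simp add: power_divide add_divide_distrib)
    also have "j2\<^sup>2 * j1 + j1\<^sup>2 * j2 = (j1 * j2) * (j1 + j2)" by (simp add: power2_eq_square algebra_simps)
    also have "(j1 * j2) * (j1 + j2) / (j1 + j2)\<^sup>2 = j1 * j2 / (j1 + j2)" using d by (simp add: power2_eq_square)
    finally show ?thesis .
  qed
  finally have bound: "fisher_shift (Rk k) (conv_first p1 p2) \<le> ennreal (j1 * j2 / (j1 + j2))" .
  define c where "c = j1 * j2 / (j1 + j2)"
  have cp: "c > 0" unfolding c_def using j1p j2p by simp
  have "1 / fisher_shift (Rk k) p1 + 1 / fisher_shift1 p2 = ennreal (1 / c)"
  proof -
    have "1 / fisher_shift (Rk k) p1 = ennreal (1 / j1)"
      unfolding j1(1) using divide_ennreal[of 1 j1] j1p by simp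
    moreover have "1 / fisher_shift1 p2 = ennreal (1 / j2)"
      unfolding F2j using divide_ennreal[of 1 j2] j2p by simp
    moreover have "1 / j1 + 1 / j2 = 1 / c"
      unfolding c_def using j1p j2p by (simp add: field_simps)
    ultimately show ?thesis using j1p j2p by (simp add: ennreal_plus[symmetric] del: ennreal_plus)
  qed
  also have "ennreal (1 / c) \<le> 1 / fisher_shift (Rk k) (conv_first p1 p2)"
  proof (cases "fisher_shift (Rk k) (conv_first p1 p2) = 0")
    case True then show ?thesis by simp
  next
    case False
    obtain x where x: "fisher_shift (Rk k) (conv_first p1 p2) = ennreal x" "x \<ge> 0"
      using bound by (cases "fisher_shift (Rk k) (conv_first p1 p2)") (auto simp: top_unique)
    have xp: "x > 0" using False x by (auto simp: less_le)
    have xc: "x \<le> c" using bound x cp unfolding c_def by (simp add: ennreal_le_iff2)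
    have "1 / c \<le> 1 / x" using xp xc by (simp add: frac_le)
    then show ?thesis unfolding x(1) using divide_ennreal[of 1 x] xp by (simp add: ennreal_leI)
  qed
  finally show ?thesis .
qed


end
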